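(* Assume the stiffness matrix $\mathbf A=(a_{\ell,k})_{\ell,k\ge2}$ of the operator $L$ belongs to $\mathcal D_e(\eta_L)$ for some $\eta_L>0$, and let $v\in\mathcal A_G^{\eta,t}$ for some $\eta>0$, $t\in(0,1]$. Suppose one of the following holds: (a) $\mathbf A$ is banded with $2p+1$ nonzero diagonals (i.e. $a_{\ell,k}=0$ whenever $|\ell-k|>p$); in this case set $\bar\eta=\eta/(2p+1)^t$, $\bar t=t$; (b) $\mathbf A$ is dense, but $\eta<\eta_L$; in this case set $\bar\eta=\zeta(t)\eta$, $\bar t=\frac{t}{1+t}$, where $\zeta(t):=\big(\frac{1+t}{2}\big)^{\frac{t}{1+t}}$ for $0<t\le1$. Then $Lv\in\mathcal A_G^{\bar\eta,\bar t}$ and $\|Lv\|_{\mathcal A_G^{\bar\eta,\bar t}}\le C\|v\|_{\mathcal A_G^{\eta,t}}$ with a constant $C$ independent of $v$.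
   Context: $I=(-1,1)$, $V=H^1_0(I)$, $L_k$ the Legendre polynomial of degree $k$ with $L_k(1)=1$, and $\eta_k=\frac{1}{\sqrt{4k-2}}(L_{k-2}-L_k)$, $k\in\mathbb N_2:=\{k\in\mathbb N:k\ge2\}$, the Babuška–Shen basis, orthonormal in $V$ for $(u,v)\mapsto\int_I u'v'$. Each $v\in V$ is $v=\sum_{k\ge2}\hat v_k\eta_k$ with $\|v\|:=\|v'\|_{L^2}=(\sum|\hat v_k|^2)^{1/2}$; each $f\in H^{-1}(I)$ has coefficients $\hat f_k=\langle f,\eta_k\rangle$ and $\|f\|:=(\sum_{k\ge2}|\hat f_k|^2)^{1/2}$. $L$ is the operator $Lw=-(\nu w')'+\sigma w$ with smooth real coefficients, $0<\nu_*\le\nu\le\nu^*$, $0\le\sigma\le\sigma^*$, associated with the bilinear form $a(w,v)=\int_I\nu w'v'+\int_I\sigma wv$ on $V$; its stiffness matrix is $a_{\ell,k}=a(\eta_k,\eta_\ell)$, so the coefficient vector of $Lv$ is $\mathbf A\mathbf v$. A matrix belongs to $\mathcal D_e(\eta_L)$ if there is $c_L>0$ with $|a_{m,n}|\le c_Le^{-\eta_L|m-n|}$ for all $m,n\ge2$. For a coefficient sequence (of a function in $V$ or a functional in $H^{-1}$), the best $N$-term approximation error is $E_N=\inf_{\Lambda\subset\mathbb N_2,|\Lambda|=N}(\sum_{k\notin\Lambda}|\hat v_k|^2)^{1/2}$, and $\mathcal A_G^{\eta,t}$ is the set of such $v$ with $\|v\|_{\mathcal A_G^{\eta,t}}:=\sup_{N\ge0}E_N(v)e^{\eta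 N^t}<\infty$. *)

theory Defs
  imports "HOL-Analysis.Analysis"
begin

text \<open>Legendre polynomials (normalised by L_k(1) = 1) via Bonnet's recurrence.\<close>
fun legendre :: "nat \<Rightarrow> real \<Rightarrow> real" where
  "legendre 0 x = 1"
| "legendre (Suc 0) x = x"
| "legendre (Suc (Suc n)) x =
     ((2 * real n + 3) * x * legendre (Suc n) x - (real n + 1) * legendre n x) / (real n + 2)"

definition bs_eta :: "nat \<Rightarrow> real \<Rightarrow> real" where
  "bs_eta k x = (legendre (k - 2) x - legendre k x) / sqrt (4 * real k - 2)"

text \<open>Stiffness matrix a_{l,k} = a(eta_k, eta_l) of L w = -(nu w')' + sig w.\<close>
definition stiffness :: "(real \<Rightarrow> real) \<Rightarrow> (real \<Rightarrow> real) \<Rightarrow> nat \<Rightarrow> nat \<Rightarrow> real" where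
  "stiffness nu sig l k = integral {-1..1}
     (\<lambda>x. nu x * deriv (bs_eta k) x * deriv (bs_eta l) x + sig x * bs_eta k x * bs_eta l x)"

definition smooth_fun :: "(real \<Rightarrow> real) \<Rightarrow> bool" where
  "smooth_fun f \<longleftrightarrow> (\<forall>n x. ((deriv ^^ n) f) differentiable (at x))"

definition in_De :: "(nat \<Rightarrow> nat \<Rightarrow> real) \<Rightarrow> real \<Rightarrow> bool" where
  "in_De A etaL \<longleftrightarrow> (\<exists>cL>0. \<forall>m\<ge>2. \<forall>n\<ge>2.
      \<bar>A m n\<bar> \<le> cL * exp (- etaL * \<bar>real m - real n\<bar>))"

definition banded :: "(nat \<Rightarrow> nat \<Rightarrow> real) \<Rightarrow> nat \<Rightarrow> bool" where
  "banded A p \<longleftrightarrow> (\<forall>l\<ge>2. \<forall>k\<ge>2. \<bar>real l - real k\<bar> > real p \<longrightarrow> A l k = 0)"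

text \<open>Coefficient vector (A v)_l = sum_{k>=2} a_{l,k} v_k of L v.\<close>
definition apply_mat :: "(nat \<Rightarrow> nat \<Rightarrow> real) \<Rightarrow> (nat \<Rightarrow> real) \<Rightarrow> nat \<Rightarrow> real" where
  "apply_mat A v l = (if l \<ge> 2 then (\<Sum>\<^sub>\<infinity>k\<in>{2..}. A l k * v k) else 0)"

definition best_N_err :: "(nat \<Rightarrow> real) \<Rightarrow> nat \<Rightarrow> real" where
  "best_N_err v N = (INF \<Lambda>\<in>{\<Lambda>. \<Lambda> \<subseteq> {2..} \<and> finite \<Lambda> \<and> card \<Lambda> = N}.
      sqrt (\<Sum>\<^sub>\<infinity>k\<in>{2..} - \<Lambda>. (v k)\<^sup>2))"

definition in_AG :: "real \<Rightarrow> real \<Rightarrow> (nat \<Rightarrow> real) \<Rightarrow> bool" where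
  "in_AG eta t v \<longleftrightarrow> (\<lambda>k. (v k)\<^sup>2) summable_on {2..} \<and>
      bdd_above (range (\<lambda>N. best_N_err v N * exp (eta * real N powr t)))"

definition AG_norm :: "real \<Rightarrow> real \<Rightarrow> (nat \<Rightarrow> real) \<Rightarrow> real" where
  "AG_norm eta t v = (SUP N. best_N_err v N * exp (eta * real N powr t))"

definition zeta :: "real \<Rightarrow> real" where
  "zeta t = ((1 + t) / 2) powr (t / (1 + t))"

end

theory Submission
  imports Defs
begin

definition bnd :: "(nat \<Rightarrow> real) \<Rightarrow> real \<Rightarrow> bool" where
  "bnd x B \<longleftrightarrow> (\<forall>F. finite F \<longrightarrow> F \<subseteq> {2..} \<longrightarrow> L2_set x F \<le> B)"

lemma bnd_nonneg: "bnd x B \<Longrightarrow> 0 \<le> B"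
  unfolding bnd_def by (metis L2_set_empty empty_subsetI finite.emptyI)

lemma bnd_sq_sum:
  assumes "bnd x B" "finite F" "F \<subseteq> {2..}"
  shows "(\<Sum>k\<in>F. (x k)\<^sup>2) \<le> B\<^sup>2"
proof -
  have "L2_set x F \<le> B" using assms unfolding bnd_def by auto
  hence "(L2_set x F)\<^sup>2 \<le> B\<^sup>2" by (intro power_mono) auto
  moreover have "(L2_set x F)\<^sup>2 = (\<Sum>k\<in>F. (x k)\<^sup>2)"
    unfolding L2_set_def by (simp add: sum_nonneg)
  ultimately show ?thesis by simp
qed

lemma bnd_summable:
  assumes "bnd x B" shows "(\<lambda>k. (x k)\<^sup>2) summable_on {2..}"
proof (rule nonneg_bdd_above_summable_on)
  show "bdd_above (sum (\<lambda>k. (x k)\<^sup>2) ` {F. F \<subseteq> {2..} \<and> finite F})"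
    unfolding bdd_above_def using bnd_sq_sum[OF assms] by blast
qed simp

lemma bnd_infsum:
  assumes "bnd x B" shows "infsum (\<lambda>k. (x k)\<^sup>2) {2..} \<le> B\<^sup>2"
  by (rule infsum_le_finite_sums[OF bnd_summable[OF assms]]) (rule bnd_sq_sum[OF assms])

lemma bnd_sqrt_infsum:
  assumes "bnd x B" shows "sqrt (infsum (\<lambda>k. (x k)\<^sup>2) {2..}) \<le> B"
  using bnd_infsum[OF assms] bnd_nonneg[OF assms] by (intro real_le_lsqrt)

lemma summable_bnd:
  assumes "(\<lambda>k. (x k)\<^sup>2) summable_on {2..}"
  shows "bnd x (sqrt (infsum (\<lambda>k. (x k)\<^sup>2) {2..}))"
  unfolding bnd_def L2_set_def
proof (intro allI impI)
  fix F :: "nat set" assume "finite F" "F \<subseteq> {2..}"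
  hence "(\<Sum>k\<in>F. (x k)\<^sup>2) \<le> infsum (\<lambda>k. (x k)\<^sup>2) {2..}"
    by (intro finite_sum_le_infsum assms) auto
  thus "sqrt (\<Sum>k\<in>F. (x k)\<^sup>2) \<le> sqrt (infsum (\<lambda>k. (x k)\<^sup>2) {2..})" by simp
qed

lemma bnd_add:
  assumes "bnd x a" "bnd y b" shows "bnd (\<lambda>k. x k + y k) (a + b)"
  unfolding bnd_def
proof (intro allI impI)
  fix F :: "nat set" assume "finite F" "F \<subseteq> {2..}"
  hence "L2_set x F \<le> a" "L2_set y F \<le> b" using assms unfolding bnd_def by auto
  thus "L2_set (\<lambda>k. x k + y k) F \<le> a + b" using L2_set_triangle_ineq[of x y F] by linarith
qed

lemma bnd_dom:
  assumes "bnd x B" "\<And>k. k \<ge> 2 \<Longrightarrow> \<bar>y k\<bar> \<le> \<bar>x k\<bar>" shows "bnd y B"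
  unfolding bnd_def
proof (intro allI impI)
  fix F :: "nat set" assume F: "finite F" "F \<subseteq> {2..}"
  have "(\<Sum>k\<in>F. (y k)\<^sup>2) \<le> (\<Sum>k\<in>F. (x k)\<^sup>2)"
    using F assms(2) by (intro sum_mono) (auto simp: abs_le_square_iff)
  hence "L2_set y F \<le> L2_set x F" unfolding L2_set_def by simp
  moreover have "L2_set x F \<le> B" using assms(1) F unfolding bnd_def by blast
  ultimately show "L2_set y F \<le> B" by linarith
qed

lemma bnd_mono: "bnd x a \<Longrightarrow> a \<le> b \<Longrightarrow> bnd x b"
  unfolding bnd_def using order_trans by blast

lemma bnd_zero: "bnd (\<lambda>k. 0) 0"
  unfolding bnd_def L2_set_def by simp

lemma bnd_sum:
  assumes "finite I" "\<And>i. i \<in> I \<Longrightarrow> bnd (f i) (b i)"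
  shows "bnd (\<lambda>k. \<Sum>i\<in>I. f i k) (\<Sum>i\<in>I. b i)"
  using assms
proof (induction I rule: finite_induct)
  case empty then show ?case by (simp add: bnd_zero)
next
  case (insert i I)
  have "bnd (\<lambda>k. f i k + (\<Sum>i\<in>I. f i k)) (b i + (\<Sum>i\<in>I. b i))"
    using insert by (intro bnd_add) auto
  thus ?case by (simp add: insert.hyps)
qed

lemma bnd_abs: assumes "bnd x B" "k \<ge> 2" shows "\<bar>x k\<bar> \<le> B"
proof -
  have "L2_set x {k} \<le> B" using assms(1)[unfolded bnd_def, rule_format, of "{k}"] assms(2) by simp
  thus ?thesis unfolding L2_set_def by simp
qed



definition dd :: "nat \<Rightarrow> nat \<Rightarrow> nat" where
  "dd l k = (if k \<le> l then l - k else k - l)"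

lemma dd_sym: "dd l k = dd k l" unfolding dd_def by auto
lemma dd_real: "\<bar>real l - real k\<bar> = real (dd l k)" unfolding dd_def by auto

lemma geom_bound:
  fixes q :: real
  assumes q: "0 \<le> q" "q < 1" and J: "finite J" "\<And>j. j \<in> J \<Longrightarrow> m \<le> j"
  shows "(\<Sum>j\<in>J. q ^ j) \<le> q ^ m / (1 - q)"
proof -
  define n where "n = max m (if J = {} then m else Max J)"
  have sub: "J \<subseteq> {m..n}" using J unfolding n_def by (auto split: if_splits)
  have "(\<Sum>j\<in>J. q ^ j) \<le> (\<Sum>j=m..n. q ^ j)"
    by (rule sum_mono2) (use sub q in auto)
  also have "(\<Sum>j=m..n. q ^ j) = (q ^ m - q ^ Suc n) / (1 - q)"
    using sum_gp_multiplied[of m n q] q unfolding n_def by (simp add: field_simps)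
  also have "\<dots> \<le> q ^ m / (1 - q)"
    using q by (intro divide_right_mono) auto
  finally show ?thesis .
qed

lemma geom_dd_bound:
  fixes q :: real
  assumes q: "0 \<le> q" "q < 1" and F: "finite F"
  shows "(\<Sum>l\<in>{l\<in>F. m \<le> dd l k}. q ^ dd l k) \<le> 2 * q ^ m / (1 - q)"
proof -
  define F1 where "F1 = {l\<in>F. m \<le> dd l k \<and> k \<le> l}"
  define F2 where "F2 = {l\<in>F. m \<le> dd l k \<and> \<not> k \<le> l}"
  have split: "{l\<in>F. m \<le> dd l k} = F1 \<union> F2" "F1 \<inter> F2 = {}" unfolding F1_def F2_def by auto
  have fin: "finite F1" "finite F2" using F unfolding F1_def F2_def by auto
  have s1: "(\<Sum>l\<in>F1. q ^ dd l k) = (\<Sum>j\<in>(\<lambda>l. l - k) ` F1. q ^ j)"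
  proof -
    have "inj_on (\<lambda>l. l - k) F1" unfolding F1_def inj_on_def by auto
    hence "(\<Sum>j\<in>(\<lambda>l. l - k) ` F1. q ^ j) = (\<Sum>l\<in>F1. q ^ (l - k))" by (simp add: sum.reindex)
    also have "\<dots> = (\<Sum>l\<in>F1. q ^ dd l k)" by (rule sum.cong) (auto simp: F1_def dd_def)
    finally show ?thesis by simp
  qed
  have s2: "(\<Sum>l\<in>F2. q ^ dd l k) = (\<Sum>j\<in>(\<lambda>l. k - l) ` F2. q ^ j)"
  proof -
    have "inj_on (\<lambda>l. k - l) F2" unfolding F2_def inj_on_def by auto
    hence "(\<Sum>j\<in>(\<lambda>l. k - l) ` F2. q ^ j) = (\<Sum>l\<in>F2. q ^ (k - l))" by (simp add: sum.reindex)
    also have "\<dots> = (\<Sum>l\<in>F2. q ^ dd l k)" by (rule sum.cong) (auto simp: F2_def dd_def)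
    finally show ?thesis by simp
  qed
  have b1: "(\<Sum>j\<in>(\<lambda>l. l - k) ` F1. q ^ j) \<le> q ^ m / (1 - q)"
    by (rule geom_bound) (use q fin in \<open>auto simp: F1_def dd_def\<close>)
  have b2: "(\<Sum>j\<in>(\<lambda>l. k - l) ` F2. q ^ j) \<le> q ^ m / (1 - q)"
    by (rule geom_bound) (use q fin in \<open>auto simp: F2_def dd_def\<close>)
  have "(\<Sum>l\<in>{l\<in>F. m \<le> dd l k}. q ^ dd l k) = (\<Sum>l\<in>F1. q ^ dd l k) + (\<Sum>l\<in>F2. q ^ dd l k)"
    unfolding split(1) by (rule sum.union_disjoint) (use fin split in auto)
  thus ?thesis using s1 s2 b1 b2 by simp
qed

lemma geom_dd_all:
  fixes q :: real
  assumes q: "0 \<le> q" "q < 1" and F: "finite F"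
  shows "(\<Sum>l\<in>F. q ^ dd l k) \<le> 2 / (1 - q)"
  using geom_dd_bound[OF q F, where m=0 and k=k] by simp

definition decayA :: "(nat \<Rightarrow> nat \<Rightarrow> real) \<Rightarrow> real \<Rightarrow> real \<Rightarrow> bool" where
  "decayA A cL q \<longleftrightarrow> 0 \<le> cL \<and> 0 < q \<and> q < 1 \<and>
     (\<forall>m n. m \<ge> 2 \<longrightarrow> n \<ge> 2 \<longrightarrow> \<bar>A m n\<bar> \<le> cL * q ^ dd m n)"

definition Sb :: "real \<Rightarrow> real \<Rightarrow> real" where "Sb cL q = 2 * cL / (1 - q)"

lemma Sb_nonneg: "decayA A cL q \<Longrightarrow> 0 \<le> Sb cL q"
  unfolding decayA_def Sb_def by auto

lemma row_bound:
  assumes "decayA A cL q" "l \<ge> 2" "finite G" "G \<subseteq> {2..}"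
  shows "(\<Sum>k\<in>G. \<bar>A l k\<bar>) \<le> Sb cL q"
proof -
  have d: "0 \<le> cL" "0 < q" "q < 1" "\<And>m n. m \<ge> 2 \<Longrightarrow> n \<ge> 2 \<Longrightarrow> \<bar>A m n\<bar> \<le> cL * q ^ dd m n"
    using assms(1) unfolding decayA_def by auto
  have "(\<Sum>k\<in>G. \<bar>A l k\<bar>) \<le> (\<Sum>k\<in>G. cL * q ^ dd k l)"
  proof (rule sum_mono)
    fix k assume "k \<in> G"
    hence "k \<ge> 2" using assms(4) by auto
    thus "\<bar>A l k\<bar> \<le> cL * q ^ dd k l" using d(4)[OF assms(2), of k] dd_sym[of k l] by simp
  qed
  also have "\<dots> = cL * (\<Sum>k\<in>G. q ^ dd k l)" by (simp add: sum_distrib_left)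
  also have "\<dots> \<le> cL * (2 / (1 - q))"
    by (rule mult_left_mono[OF geom_dd_all]) (use d assms(3) in auto)
  finally show ?thesis unfolding Sb_def by (simp add: mult.commute)
qed

lemma col_bound:
  assumes "decayA A cL q" "k \<ge> 2" "finite F" "F \<subseteq> {2..}"
  shows "(\<Sum>l\<in>F. \<bar>A l k\<bar>) \<le> Sb cL q"
proof -
  have d: "0 \<le> cL" "0 < q" "q < 1" "\<And>m n. m \<ge> 2 \<Longrightarrow> n \<ge> 2 \<Longrightarrow> \<bar>A m n\<bar> \<le> cL * q ^ dd m n"
    using assms(1) unfolding decayA_def by auto
  have "(\<Sum>l\<in>F. \<bar>A l k\<bar>) \<le> (\<Sum>l\<in>F. cL * q ^ dd l k)"
    by (rule sum_mono) (use d(4) assms(2,4) in \<open>auto\<close>)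
  also have "\<dots> = cL * (\<Sum>l\<in>F. q ^ dd l k)" by (simp add: sum_distrib_left)
  also have "\<dots> \<le> cL * (2 / (1 - q))"
    by (rule mult_left_mono[OF geom_dd_all]) (use d assms(3) in auto)
  finally show ?thesis unfolding Sb_def by (simp add: mult.commute)
qed

lemma finite_schur:
  fixes a :: "nat \<Rightarrow> nat \<Rightarrow> real"
  assumes F: "finite F" and G: "finite G" and S: "0 \<le> S"
    and row: "\<And>l. l \<in> F \<Longrightarrow> (\<Sum>k\<in>G. \<bar>a l k\<bar>) \<le> S"
    and col: "\<And>k. k \<in> G \<Longrightarrow> (\<Sum>l\<in>F. \<bar>a l k\<bar>) \<le> S"
  shows "(\<Sum>l\<in>F. (\<Sum>k\<in>G. a l k * x k)\<^sup>2) \<le> S\<^sup>2 * (\<Sum>k\<in>G. (x k)\<^sup>2)"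
proof -
  have each: "(\<Sum>k\<in>G. a l k * x k)\<^sup>2 \<le> S * (\<Sum>k\<in>G. \<bar>a l k\<bar> * (x k)\<^sup>2)" if l: "l \<in> F" for l
  proof -
    have "\<bar>\<Sum>k\<in>G. a l k * x k\<bar> \<le> (\<Sum>k\<in>G. sqrt \<bar>a l k\<bar> * (sqrt \<bar>a l k\<bar> * \<bar>x k\<bar>))"
    proof -
      have "\<bar>\<Sum>k\<in>G. a l k * x k\<bar> \<le> (\<Sum>k\<in>G. \<bar>a l k * x k\<bar>)" by (rule sum_abs)
      also have "\<dots> = (\<Sum>k\<in>G. sqrt \<bar>a l k\<bar> * (sqrt \<bar>a l k\<bar> * \<bar>x k\<bar>))"
        by (rule sum.cong) (auto simp: abs_mult mult.assoc[symmetric])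
      finally show ?thesis .
    qed
    hence "(\<Sum>k\<in>G. a l k * x k)\<^sup>2 \<le> (\<Sum>k\<in>G. sqrt \<bar>a l k\<bar> * (sqrt \<bar>a l k\<bar> * \<bar>x k\<bar>))\<^sup>2"
      by (metis abs_ge_zero order_trans power2_abs power_mono)
    also have "\<dots> \<le> (\<Sum>k\<in>G. (sqrt \<bar>a l k\<bar>)\<^sup>2) * (\<Sum>k\<in>G. (sqrt \<bar>a l k\<bar> * \<bar>x k\<bar>)\<^sup>2)"
      by (rule Cauchy_Schwarz_ineq_sum)
    also have "\<dots> = (\<Sum>k\<in>G. \<bar>a l k\<bar>) * (\<Sum>k\<in>G. \<bar>a l k\<bar> * (x k)\<^sup>2)"
      by (simp add: power_mult_distrib)
    also have "\<dots> \<le> S * (\<Sum>k\<in>G. \<bar>a l k\<bar> * (x k)\<^sup>2)"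
      by (rule mult_right_mono[OF row[OF l]]) (simp add: sum_nonneg)
    finally show ?thesis .
  qed
  have "(\<Sum>l\<in>F. (\<Sum>k\<in>G. a l k * x k)\<^sup>2) \<le> (\<Sum>l\<in>F. S * (\<Sum>k\<in>G. \<bar>a l k\<bar> * (x k)\<^sup>2))"
    by (rule sum_mono) (rule each)
  also have "\<dots> = S * (\<Sum>k\<in>G. (\<Sum>l\<in>F. \<bar>a l k\<bar>) * (x k)\<^sup>2)"
    by (simp add: sum_distrib_left sum_distrib_right sum.swap[of _ F G])
  also have "\<dots> \<le> S * (\<Sum>k\<in>G. S * (x k)\<^sup>2)"
    by (intro mult_left_mono sum_mono mult_right_mono col) (use S in auto)
  also have "\<dots> = S\<^sup>2 * (\<Sum>k\<in>G. (x k)\<^sup>2)"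
    by (simp add: sum_distrib_left power2_eq_square mult.assoc)
  finally show ?thesis .
qed

lemma row_summable:
  assumes dA: "decayA A cL q" and x: "bnd x B" and l: "l \<ge> 2"
  shows "(\<lambda>k. A l k * x k) summable_on {2..}"
proof -
  have "(\<lambda>k. norm (A l k * x k)) summable_on {2..}"
  proof (rule nonneg_bdd_above_summable_on)
    have "sum (\<lambda>k. norm (A l k * x k)) G \<le> Sb cL q * B" if "G \<subseteq> {2..}" "finite G" for G
    proof -
      have "sum (\<lambda>k. norm (A l k * x k)) G \<le> (\<Sum>k\<in>G. \<bar>A l k\<bar> * B)"
        by (rule sum_mono) (use bnd_abs[OF x] that in \<open>auto simp: abs_mult intro!: mult_left_mono\<close>)
      also have "\<dots> = (\<Sum>k\<in>G. \<bar>A l k\<bar>) * B" by (simp add: sum_distrib_right)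
      also have "\<dots> \<le> Sb cL q * B"
        by (rule mult_right_mono[OF row_bound[OF dA l that(2,1)] bnd_nonneg[OF x]])
      finally show ?thesis .
    qed
    thus "bdd_above (sum (\<lambda>k. norm (A l k * x k)) ` {F. F \<subseteq> {2..} \<and> finite F})"
      unfolding bdd_above_def by blast
  qed simp
  thus ?thesis by (rule abs_summable_summable)
qed

lemma apply_mat_bnd:
  assumes dA: "decayA A cL q" and x: "bnd x B"
  shows "bnd (apply_mat A x) (Sb cL q * B)"
  unfolding bnd_def
proof (intro allI impI)
  fix F :: "nat set" assume F: "finite F" "F \<subseteq> {2..}"
  have S: "0 \<le> Sb cL q" using Sb_nonneg[OF dA] .
  have hs: "((\<lambda>k. A l k * x k) has_sum apply_mat A x l) {2..}" if "l \<in> F" for l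
  proof -
    have l: "l \<ge> 2" using F that by auto
    show ?thesis unfolding apply_mat_def using l has_sum_infsum[OF row_summable[OF dA x l]] by simp
  qed
  have lim: "((\<lambda>G. \<Sum>l\<in>F. (\<Sum>k\<in>G. A l k * x k)\<^sup>2) \<longlongrightarrow> (\<Sum>l\<in>F. (apply_mat A x l)\<^sup>2))
               (finite_subsets_at_top {2..})"
    by (intro tendsto_sum tendsto_power) (use hs in \<open>auto simp: has_sum_def\<close>)
  have ev: "eventually (\<lambda>G. (\<Sum>l\<in>F. (\<Sum>k\<in>G. A l k * x k)\<^sup>2) \<le> (Sb cL q * B)\<^sup>2)
               (finite_subsets_at_top {2..})"
  proof (rule eventually_finite_subsets_at_top_weakI)
    fix G :: "nat set" assume G: "finite G" "G \<subseteq> {2..}"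
    have "(\<Sum>l\<in>F. (\<Sum>k\<in>G. A l k * x k)\<^sup>2) \<le> (Sb cL q)\<^sup>2 * (\<Sum>k\<in>G. (x k)\<^sup>2)"
    proof (rule finite_schur[OF F(1) G(1) S])
      show "(\<Sum>k\<in>G. \<bar>A l k\<bar>) \<le> Sb cL q" if "l \<in> F" for l
        using row_bound[OF dA _ G] F that by auto
      show "(\<Sum>l\<in>F. \<bar>A l k\<bar>) \<le> Sb cL q" if "k \<in> G" for k
        using col_bound[OF dA _ F] G that by auto
    qed
    also have "\<dots> \<le> (Sb cL q)\<^sup>2 * B\<^sup>2"
      by (rule mult_left_mono[OF bnd_sq_sum[OF x G]]) simp
    finally show "(\<Sum>l\<in>F. (\<Sum>k\<in>G. A l k * x k)\<^sup>2) \<le> (Sb cL q * B)\<^sup>2"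
      by (simp add: power_mult_distrib)
  qed
  have "(\<Sum>l\<in>F. (apply_mat A x l)\<^sup>2) \<le> (Sb cL q * B)\<^sup>2"
    by (rule tendsto_upperbound[OF lim ev]) simp
  thus "L2_set (apply_mat A x) F \<le> Sb cL q * B"
    unfolding L2_set_def using S bnd_nonneg[OF x] by (intro real_le_lsqrt) auto
qed



abbreviation sq2 :: "(nat \<Rightarrow> real) \<Rightarrow> bool" where
  "sq2 v \<equiv> (\<lambda>k. (v k)\<^sup>2) summable_on {2..}"

lemma infinite_from2: "infinite ({2..} - G)" if "finite G" for G :: "nat set"
  using that by (metis finite_Diff2 infinite_Ici)

lemma ex_max:
  assumes v: "sq2 v" and G: "finite G"
  shows "\<exists>k. k \<in> {2..} - G \<and> (\<forall>j\<in>{2..} - G. \<bar>v j\<bar> \<le> \<bar>v k\<bar>)"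
proof (cases "\<forall>j\<in>{2..} - G. v j = 0")
  case True
  obtain k where "k \<in> {2..} - G" using infinite_from2[OF G] by (metis finite.emptyI ex_in_conv)
  thus ?thesis using True by auto
next
  case False
  then obtain j0 where j0: "j0 \<in> {2..} - G" "v j0 \<noteq> 0" by auto
  define U where "U = {2..} - G"
  define T where "T = {j\<in>U. \<bar>v j0\<bar> \<le> \<bar>v j\<bar>}"
  have finT: "finite T"
  proof (rule ccontr)
    assume inf: "infinite T"
    define tot where "tot = infsum (\<lambda>k. (v k)\<^sup>2) {2..}"
    define m where "m = nat \<lceil>tot / (v j0)\<^sup>2\<rceil> + 1"
    obtain B where B: "finite B" "card B = m" "B \<subseteq> T" using infinite_arbitrarily_large[OF inf] by blast
    have pos: "(v j0)\<^sup>2 > 0" using j0 by simp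
    have "real m * (v j0)\<^sup>2 = (\<Sum>k\<in>B. (v j0)\<^sup>2)" using B by simp
    also have "\<dots> \<le> (\<Sum>k\<in>B. (v k)\<^sup>2)"
      by (rule sum_mono) (use B in \<open>auto simp: T_def abs_le_square_iff\<close>)
    also have "\<dots> \<le> tot" unfolding tot_def
      by (rule finite_sum_le_infsum[OF v B(1)]) (use B in \<open>auto simp: T_def U_def\<close>)
    finally have "real m * (v j0)\<^sup>2 \<le> tot" .
    moreover have "tot / (v j0)\<^sup>2 < real m" unfolding m_def by linarith
    hence "tot < real m * (v j0)\<^sup>2" using pos by (simp add: field_simps)
    ultimately show False by simp
  qed
  have j0T: "j0 \<in> T" using j0 unfolding T_def U_def by auto
  define mu where "mu = Max ((\<lambda>j. \<bar>v j\<bar>) ` T)"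
  have "mu \<in> (\<lambda>j. \<bar>v j\<bar>) ` T" unfolding mu_def using finT j0T by (intro Max_in) auto
  then obtain k where k: "k \<in> T" "\<bar>v k\<bar> = mu" by auto
  have "\<bar>v j\<bar> \<le> \<bar>v k\<bar>" if "j \<in> U" for j
  proof (cases "j \<in> T")
    case True
    have "\<bar>v j\<bar> \<le> mu" unfolding mu_def using True finT by (intro Max_ge) auto
    thus ?thesis using k(2) by simp
  next
    case False
    hence "\<bar>v j\<bar> < \<bar>v j0\<bar>" using that unfolding T_def by auto
    moreover have "\<bar>v j0\<bar> \<le> \<bar>v k\<bar>" using k finT j0T unfolding mu_def by (metis Max_ge finite_imageI imageI)
    ultimately show ?thesis by simp
  qed
  thus ?thesis using k unfolding T_def U_def by blast
qed

definition pick :: "(nat \<Rightarrow> real) \<Rightarrow> nat set \<Rightarrow> nat" where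
  "pick v G = (SOME k. k \<in> {2..} - G \<and> (\<forall>j\<in>{2..} - G. \<bar>v j\<bar> \<le> \<bar>v k\<bar>))"

lemma pick:
  assumes "sq2 v" "finite G"
  shows "pick v G \<in> {2..} - G" "\<And>j. j \<in> {2..} - G \<Longrightarrow> \<bar>v j\<bar> \<le> \<bar>v (pick v G)\<bar>"
  using someI_ex[OF ex_max[OF assms]] unfolding pick_def by blast+

primrec gam :: "(nat \<Rightarrow> real) \<Rightarrow> nat \<Rightarrow> nat set" where
  "gam v 0 = {}"
| "gam v (Suc n) = insert (pick v (gam v n)) (gam v n)"

definition sg :: "(nat \<Rightarrow> real) \<Rightarrow> nat \<Rightarrow> nat" where "sg v n = pick v (gam v n)"

lemma gam_props:
  assumes v: "sq2 v"
  shows "finite (gam v n) \<and> gam v n \<subseteq> {2..} \<and> card (gam v n) = n \<and> gam v n = sg v ` {..<n}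
         \<and> (\<forall>k\<in>gam v n. \<forall>j\<in>{2..} - gam v n. \<bar>v j\<bar> \<le> \<bar>v k\<bar>)"
proof (induction n)
  case 0 thus ?case by simp
next
  case (Suc n)
  have fin: "finite (gam v n)" using Suc by blast
  note p = pick[OF v fin]
  have "gam v (Suc n) = sg v ` {..<Suc n}" using Suc by (auto simp: sg_def lessThan_Suc)
  moreover have "card (gam v (Suc n)) = Suc n" using Suc p(1) fin by auto
  moreover have "\<forall>k\<in>gam v (Suc n). \<forall>j\<in>{2..} - gam v (Suc n). \<bar>v j\<bar> \<le> \<bar>v k\<bar>"
    using Suc p by auto
  moreover have "gam v (Suc n) \<subseteq> {2..}"
  proof -
    have a: "gam v n \<subseteq> {2..}" using Suc.IH by blast
    have b: "pick v (gam v n) \<in> {2..}" using p(1) by blast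
    show ?thesis unfolding gam.simps using a b by blast
  qed
  moreover have "finite (gam v (Suc n))" using fin by simp
  ultimately show ?case by blast
qed

lemma gam_fin: "sq2 v \<Longrightarrow> finite (gam v n)" using gam_props by blast
lemma gam_sub: "sq2 v \<Longrightarrow> gam v n \<subseteq> {2..}" using gam_props by blast
lemma gam_card: "sq2 v \<Longrightarrow> card (gam v n) = n" using gam_props by blast
lemma gam_img: "sq2 v \<Longrightarrow> gam v n = sg v ` {..<n}" using gam_props by blast
lemma gam_dom: "sq2 v \<Longrightarrow> k \<in> gam v n \<Longrightarrow> j \<ge> 2 \<Longrightarrow> j \<notin> gam v n \<Longrightarrow> \<bar>v j\<bar> \<le> \<bar>v k\<bar>"
  using gam_props by blast

lemma sg_props:
  assumes v: "sq2 v"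
  shows "sg v n \<ge> 2" "sg v n \<notin> gam v n" "inj_on (sg v) {..<N}"
proof -
  have fin: "finite (gam v n)" using gam_fin[OF v] .
  show "sg v n \<ge> 2" "sg v n \<notin> gam v n" using pick(1)[OF v fin] unfolding sg_def by auto
  have "card (sg v ` {..<N}) = N" using gam_props[OF v, of N] by metis
  hence "card (sg v ` {..<N}) = card {..<N}" by simp
  thus "inj_on (sg v) {..<N}" by (simp add: inj_on_iff_eq_card)
qed

lemma sorted_opt:
  assumes v: "sq2 v" and L: "L \<subseteq> {2..}" "finite L" "card L = n"
  shows "(\<Sum>k\<in>L. (v k)\<^sup>2) \<le> (\<Sum>k\<in>gam v n. (v k)\<^sup>2)"
proof -
  define G where "G = gam v n"
  have G: "finite G" "G \<subseteq> {2..}" "card G = n" "\<forall>k\<in>G. \<forall>j\<in>{2..} - G. \<bar>v j\<bar> \<le> \<bar>v k\<bar>"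
    unfolding G_def using gam_fin[OF v] gam_sub[OF v] gam_card[OF v] gam_dom[OF v] by auto
  have c1: "card (L - G) = n - card (L \<inter> G)" using L by (simp add: card_Diff_subset_Int)
  have c2: "card (G - L) = n - card (G \<inter> L)" using G by (simp add: card_Diff_subset_Int)
  have "card (L - G) = card (G - L)" using c1 c2 by (simp add: Int_commute)
  then obtain h where h: "bij_betw h (L - G) (G - L)"
    using finite_same_card_bij[of "L - G" "G - L"] L G by auto
  have "(\<Sum>k\<in>L - G. (v k)\<^sup>2) \<le> (\<Sum>k\<in>L - G. (v (h k))\<^sup>2)"
  proof (rule sum_mono)
    fix k assume k: "k \<in> L - G"
    have "h k \<in> G" using h k by (auto simp: bij_betw_def)
    hence "\<bar>v k\<bar> \<le> \<bar>v (h k)\<bar>" using G(4) k L(1) by auto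
    thus "(v k)\<^sup>2 \<le> (v (h k))\<^sup>2" by (simp add: abs_le_square_iff)
  qed
  also have "\<dots> = (\<Sum>k\<in>G - L. (v k)\<^sup>2)" by (rule sum.reindex_bij_betw[OF h])
  finally have "(\<Sum>k\<in>L - G. (v k)\<^sup>2) \<le> (\<Sum>k\<in>G - L. (v k)\<^sup>2)" .
  moreover have "(\<Sum>k\<in>L. (v k)\<^sup>2) = (\<Sum>k\<in>L \<inter> G. (v k)\<^sup>2) + (\<Sum>k\<in>L - G. (v k)\<^sup>2)"
    using L(2) by (rule sum.Int_Diff)
  moreover have "(\<Sum>k\<in>G. (v k)\<^sup>2) = (\<Sum>k\<in>G \<inter> L. (v k)\<^sup>2) + (\<Sum>k\<in>G - L. (v k)\<^sup>2)"
    using G(1) by (rule sum.Int_Diff)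
  ultimately show ?thesis unfolding G_def by (simp add: Int_commute)
qed

lemma tail_eq:
  assumes v: "sq2 v" and X: "X \<subseteq> {2..}" "finite X"
  shows "infsum (\<lambda>k. (v k)\<^sup>2) ({2..} - X) = infsum (\<lambda>k. (v k)\<^sup>2) {2..} - (\<Sum>k\<in>X. (v k)\<^sup>2)"
  using infsum_Diff[OF v summable_on_finite[OF X(2)] X(1)] X(2) by simp

lemma bdd_sqrt: "bdd_below ((\<lambda>\<Lambda>. sqrt (infsum (\<lambda>k. (w k)\<^sup>2) ({2..} - \<Lambda>))) ` S)"
proof (rule bdd_belowI[of _ 0])
  fix x assume "x \<in> (\<lambda>\<Lambda>. sqrt (infsum (\<lambda>k. (w k)\<^sup>2) ({2..} - \<Lambda>))) ` S"
  then obtain L where "x = sqrt (infsum (\<lambda>k. (w k)\<^sup>2) ({2..} - L))" by blast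
  moreover have "infsum (\<lambda>k. (w k)\<^sup>2) ({2..} - L) \<ge> 0" by (rule infsum_nonneg) simp
  ultimately show "0 \<le> x" by simp
qed

lemma best_eq:
  assumes v: "sq2 v"
  shows "best_N_err v n = sqrt (infsum (\<lambda>k. (v k)\<^sup>2) ({2..} - gam v n))"
proof -
  define S :: "nat set set" where "S = {\<Lambda>. \<Lambda> \<subseteq> {2..} \<and> finite \<Lambda> \<and> card \<Lambda> = n}"
  define f where "f = (\<lambda>\<Lambda>. sqrt (infsum (\<lambda>k. (v k)\<^sup>2) ({2..} - \<Lambda>)))"
  have b: "best_N_err v n = Inf (f ` S)" unfolding best_N_err_def S_def f_def by simp
  have gS: "gam v n \<in> S" using gam_fin[OF v] gam_sub[OF v] gam_card[OF v] unfolding S_def by blast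
  have "Inf (f ` S) \<le> f (gam v n)"
    unfolding f_def by (rule cINF_lower[OF bdd_sqrt gS])
  moreover have "f (gam v n) \<le> Inf (f ` S)"
  proof (rule cINF_greatest)
    show "S \<noteq> {}" using gS by auto
    fix L assume "L \<in> S"
    hence L: "L \<subseteq> {2..}" "finite L" "card L = n" unfolding S_def by auto
    have G: "gam v n \<subseteq> {2..}" "finite (gam v n)" using gam_fin[OF v] gam_sub[OF v] by blast+
    show "f (gam v n) \<le> f L"
      unfolding f_def tail_eq[OF v L(1,2)] tail_eq[OF v G]
      using sorted_opt[OF v L] by simp
  qed
  ultimately have "Inf (f ` S) = f (gam v n)" by (rule antisym)
  hence "best_N_err v n = f (gam v n)" using b by simp
  thus ?thesis by (simp only: f_def)
qed

lemma best_nonneg: "best_N_err v n \<ge> 0"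
proof -
  obtain B :: "nat set" where B: "finite B" "card B = n" "B \<subseteq> {2..}"
    using infinite_arbitrarily_large[OF infinite_Ici[of "2::nat"], of n] by blast
  have "B \<in> {\<Lambda>. \<Lambda> \<subseteq> {2::nat..} \<and> finite \<Lambda> \<and> card \<Lambda> = n}" using B by simp
  hence ne: "{\<Lambda>. \<Lambda> \<subseteq> {2::nat..} \<and> finite \<Lambda> \<and> card \<Lambda> = n} \<noteq> {}" by (metis empty_iff)
  show ?thesis unfolding best_N_err_def by (rule cINF_greatest[OF ne]) (simp add: infsum_nonneg)
qed

lemma bnd_tail:
  assumes v: "sq2 v"
  shows "bnd (\<lambda>k. if k \<in> gam v n then 0 else v k) (best_N_err v n)"
  unfolding bnd_def
proof (intro allI impI)
  fix F :: "nat set" assume F: "finite F" "F \<subseteq> {2..}"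
  have G: "gam v n \<subseteq> {2..}" "finite (gam v n)" using gam_fin[OF v] gam_sub[OF v] by blast+
  have "(\<Sum>k\<in>F. (if k \<in> gam v n then 0 else v k)\<^sup>2) = (\<Sum>k\<in>F - gam v n. (v k)\<^sup>2)"
    using F(1) by (intro sum.mono_neutral_cong_right) auto
  also have "\<dots> \<le> infsum (\<lambda>k. (v k)\<^sup>2) ({2..} - gam v n)"
  proof (rule finite_sum_le_infsum)
    show "(\<lambda>k. (v k)\<^sup>2) summable_on {2..} - gam v n"
      by (rule summable_on_Diff[OF v summable_on_finite[OF G(2)] G(1)])
  qed (use F in auto)
  finally show "L2_set (\<lambda>k. if k \<in> gam v n then 0 else v k) F \<le> best_N_err v n"
    unfolding best_eq[OF v] L2_set_def by simp
qed

lemma sg_bound: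
  assumes v: "sq2 v" shows "\<bar>v (sg v n)\<bar> \<le> best_N_err v n"
  using bnd_abs[OF bnd_tail[OF v, of n], of "sg v n"] sg_props[OF v, of n] by simp

lemma bnd_v0:
  assumes v: "sq2 v" shows "bnd v (best_N_err v 0)"
  using bnd_tail[OF v, of 0] by simp

lemma extend_set:
  fixes L :: "nat set"
  assumes "finite L" "L \<subseteq> {2..}" "card L \<le> M"
  shows "\<exists>L'. L \<subseteq> L' \<and> L' \<subseteq> {2..} \<and> finite L' \<and> card L' = M"
proof -
  obtain T where T: "finite T" "card T = M - card L" "T \<subseteq> {2..} - L"
    using infinite_arbitrarily_large[OF infinite_from2[OF assms(1)]] by blast
  have "card (L \<union> T) = card L + card T" using T assms(1) by (intro card_Un_disjoint) auto
  thus ?thesis using T assms by (intro exI[of _ "L \<union> T"]) auto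
qed

lemma best_le:
  fixes L :: "nat set"
  assumes L: "finite L" "L \<subseteq> {2..}" "card L \<le> M"
    and b: "bnd (\<lambda>k. if k \<in> L then 0 else w k) B"
  shows "best_N_err w M \<le> B"
proof -
  obtain L' where L': "L \<subseteq> L'" "L' \<subseteq> {2..}" "finite L'" "card L' = M"
    using extend_set[OF L] by blast
  define y where "y = (\<lambda>k. if k \<in> L' then 0 else w k)"
  have hy: "bnd y B" unfolding y_def
  proof (rule bnd_dom[OF b])
    fix k :: nat show "\<bar>if k \<in> L' then 0 else w k\<bar> \<le> \<bar>if k \<in> L then 0 else w k\<bar>"
      using L'(1) by (cases "k \<in> L'"; cases "k \<in> L") auto
  qed
  have eq: "infsum (\<lambda>k. (y k)\<^sup>2) {2..} = infsum (\<lambda>k. (w k)\<^sup>2) ({2..} - L')"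
    by (rule infsum_cong_neutral) (auto simp: y_def)
  have "best_N_err w M \<le> sqrt (infsum (\<lambda>k. (w k)\<^sup>2) ({2..} - L'))"
    unfolding best_N_err_def
    by (rule cINF_lower[OF bdd_sqrt]) (simp add: L'(2,3,4))
  also have "\<dots> \<le> B" using bnd_sqrt_infsum[OF hy] eq by simp
  finally show ?thesis .
qed



lemma card_window: "card {a - p .. a + p :: nat} \<le> 2 * p + 1"
  by simp

lemma approx:
  assumes dA: "decayA A cL q" and v: "sq2 v"
    and M: "(\<Sum>n<N. 2 * P n + 1) \<le> M"
    and R: "\<And>n. n < N \<Longrightarrow> bnd (\<lambda>l. if P n < dd l (sg v n) then A l (sg v n) * v (sg v n) else 0) (R n)"
  shows "best_N_err (apply_mat A v) M \<le> Sb cL q * best_N_err v N + (\<Sum>n<N. R n)"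
proof -
  define G where "G = gam v N"
  have Gfin: "finite G" and Gsub: "G \<subseteq> {2..}" and Gimg: "G = sg v ` {..<N}"
    unfolding G_def using gam_fin[OF v] gam_sub[OF v] gam_img[OF v] by auto
  have sinj: "inj_on (sg v) {..<N}" using sg_props(3)[OF v] .
  define vr where "vr = (\<lambda>k. if k \<in> G then 0 else v k)"
  define vG where "vG = (\<lambda>k. if k \<in> G then v k else 0)"
  have bvr: "bnd vr (best_N_err v N)" unfolding vr_def G_def by (rule bnd_tail[OF v])
  have bv: "bnd v (best_N_err v 0)" by (rule bnd_v0[OF v])
  have bvG: "bnd vG (best_N_err v 0)" unfolding vG_def by (rule bnd_dom[OF bv]) simp
  have split: "apply_mat A v l = apply_mat A vr l + (\<Sum>n<N. A l (sg v n) * v (sg v n))" if l: "l \<ge> 2" for l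
  proof -
    have "apply_mat A v l = infsum (\<lambda>k. A l k * vr k + A l k * vG k) {2..}"
    proof -
      have "(\<lambda>k. A l k * vr k + A l k * vG k) = (\<lambda>k. A l k * v k)"
        by (rule ext) (simp add: vr_def vG_def)
      thus ?thesis unfolding apply_mat_def using l by simp
    qed
    also have "\<dots> = infsum (\<lambda>k. A l k * vr k) {2..} + infsum (\<lambda>k. A l k * vG k) {2..}"
      by (rule infsum_add[OF row_summable[OF dA bvr l] row_summable[OF dA bvG l]])
    also have "infsum (\<lambda>k. A l k * vG k) {2..} = infsum (\<lambda>k. A l k * v k) G"
      by (rule infsum_cong_neutral) (use Gsub in \<open>auto simp: vG_def\<close>)
    also have "\<dots> = (\<Sum>k\<in>G. A l k * v k)" using Gfin by simp
    also have "\<dots> = (\<Sum>n<N. A l (sg v n) * v (sg v n))" unfolding Gimg by (rule sum.reindex[OF sinj, unfolded comp_def])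
    finally show ?thesis unfolding apply_mat_def using l by simp
  qed
  define r where "r = (\<lambda>n l. if P n < dd l (sg v n) then A l (sg v n) * v (sg v n) else 0)"
  define u where "u = (\<lambda>l. \<Sum>n<N. if dd l (sg v n) \<le> P n then A l (sg v n) * v (sg v n) else 0)"
  define e where "e = (\<lambda>l. apply_mat A vr l + (\<Sum>n<N. r n l))"
  have be: "bnd e (Sb cL q * best_N_err v N + (\<Sum>n<N. R n))"
    unfolding e_def
    by (rule bnd_add[OF apply_mat_bnd[OF dA bvr] bnd_sum]) (use R in \<open>auto simp: r_def\<close>)
  have diff: "apply_mat A v l - u l = e l" if "l \<ge> 2" for l
  proof -
    have "(\<Sum>n<N. A l (sg v n) * v (sg v n)) - u l = (\<Sum>n<N. r n l)"
      unfolding u_def r_def by (simp add: sum_subtractf[symmetric]) (rule sum.cong, auto)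
    thus ?thesis using split[OF that] unfolding e_def by simp
  qed
  define Lam where "Lam = {l. l \<ge> 2 \<and> (\<exists>n<N. dd l (sg v n) \<le> P n)}"
  have Lsub: "Lam \<subseteq> (\<Union>n<N. {sg v n - P n .. sg v n + P n})"
  proof
    fix l assume "l \<in> Lam"
    then obtain n where n: "n < N" "dd l (sg v n) \<le> P n" unfolding Lam_def by blast
    hence "l \<in> {sg v n - P n .. sg v n + P n}" unfolding dd_def by (auto split: if_splits)
    thus "l \<in> (\<Union>n<N. {sg v n - P n .. sg v n + P n})" using n(1) by blast
  qed
  have Lfin: "finite Lam" by (rule finite_subset[OF Lsub]) auto
  have "card Lam \<le> card (\<Union>n<N. {sg v n - P n .. sg v n + P n})"
    by (rule card_mono[OF _ Lsub]) auto
  also have "\<dots> \<le> (\<Sum>n<N. card {sg v n - P n .. sg v n + P n})" by (rule card_UN_le) simp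
  also have "\<dots> \<le> (\<Sum>n<N. 2 * P n + 1)" by (rule sum_mono) (rule card_window)
  finally have Lcard: "card Lam \<le> M" using M by linarith
  have dom: "bnd (\<lambda>l. if l \<in> Lam then 0 else apply_mat A v l) (Sb cL q * best_N_err v N + (\<Sum>n<N. R n))"
  proof (rule bnd_dom[OF be])
    fix l :: nat assume l: "l \<ge> 2"
    show "\<bar>if l \<in> Lam then 0 else apply_mat A v l\<bar> \<le> \<bar>e l\<bar>"
    proof (cases "l \<in> Lam")
      case False
      hence "u l = 0" unfolding u_def Lam_def using l by (intro sum.neutral) auto
      thus ?thesis using False diff[OF l] by simp
    qed simp
  qed
  show ?thesis by (rule best_le[OF Lfin _ Lcard dom]) (auto simp: Lam_def)
qed



lemma powr_split1:
  fixes a s :: real assumes "0 < a" shows "a powr s = a powr (s - 1) * a"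
proof -
  have "a powr s = a powr ((s - 1) + 1)" by simp
  also have "\<dots> = a powr (s - 1) * a powr 1" by (rule powr_add)
  also have "\<dots> = a powr (s - 1) * a" using assms by simp
  finally show ?thesis .
qed

lemma cvx_powr:
  fixes a b r :: real
  assumes b: "0 \<le> b" "b \<le> a" and a: "0 < a" and r: "1 \<le> r"
  shows "a powr r - b powr r \<le> r * a powr (r - 1) * (a - b)"
proof (cases "b = 0")
  case True
  have "a powr r = a powr (r - 1) * a" by (rule powr_split1[OF a])
  moreover have "a powr (r - 1) * a \<le> r * a powr (r - 1) * a"
    using r a by (intro mult_right_mono) (auto intro: mult_right_mono[of 1 r, simplified])
  ultimately show ?thesis using True by simp
next
  case False
  hence bpos: "0 < b" using b by simp
  define g where "g = (\<lambda>x. r * a powr (r - 1) * x - x powr r)"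
  have deriv: "(g has_real_derivative (r * a powr (r - 1) - r * x powr (r - 1))) (at x)" if "0 < x" for x
    unfolding g_def using that
    by (auto intro!: derivative_eq_intros)
  have "g b \<le> g a"
  proof (rule DERIV_nonneg_imp_increasing_open[OF b(2)])
    fix x assume x: "b < x" "x < a"
    have "x powr (r - 1) \<le> a powr (r - 1)" using x bpos r by (intro powr_mono2) auto
    hence "0 \<le> r * a powr (r - 1) - r * x powr (r - 1)" using r by (simp add: mult_left_mono)
    thus "\<exists>y. (g has_real_derivative y) (at x) \<and> 0 \<le> y" using deriv[of x] x bpos by auto
  next
    show "continuous_on {b..a} g"
    proof (rule continuous_at_imp_continuous_on, rule ballI)
      fix x assume "x \<in> {b..a}"
      hence "0 < x" using bpos by auto
      thus "isCont g x" by (rule DERIV_isCont[OF deriv])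
    qed
  qed
  thus ?thesis unfolding g_def by (simp add: algebra_simps)
qed

lemma sum_powr_lower:
  fixes t :: real assumes t: "0 < t"
  shows "real N powr (1 + t) / (1 + t) \<le> (\<Sum>n<Suc N. real n powr t)"
proof (induction N)
  case 0 thus ?case using t by simp
next
  case (Suc N)
  have c: "real (Suc N) powr (1 + t) - real N powr (1 + t) \<le> (1 + t) * real (Suc N) powr t * 1"
    using cvx_powr[of "real N" "real (Suc N)" "1 + t"] t by simp
  have c2: "real (Suc N) powr (1 + t) \<le> real N powr (1 + t) + (1 + t) * real (Suc N) powr t"
    using c by simp
  have "real (Suc N) powr (1 + t) / (1 + t) \<le> (real N powr (1 + t) + (1 + t) * real (Suc N) powr t) / (1 + t)"
    using c2 t by (intro divide_right_mono) auto
  also have "\<dots> = real N powr (1 + t) / (1 + t) + real (Suc N) powr t"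
    using t by (simp add: add_divide_distrib)
  finally have "real (Suc N) powr (1 + t) / (1 + t) \<le> real N powr (1 + t) / (1 + t) + real (Suc N) powr t" .
  also have "\<dots> \<le> (\<Sum>n<Suc N. real n powr t) + real (Suc N) powr t" using Suc by simp
  finally show ?case by simp
qed

lemma inv_sq_sum: "(\<Sum>n<N. 1 / (real (N - n) + 1)\<^sup>2) \<le> 1"
proof -
  define f where "f = (\<lambda>n. 1 / (real (N - n) + 1))"
  have "(\<Sum>n<N. 1 / (real (N - n) + 1)\<^sup>2) \<le> (\<Sum>n<N. f (Suc n) - f n)"
  proof (rule sum_mono)
    fix n assume n: "n \<in> {..<N}"
    hence e: "real (N - Suc n) + 1 = real (N - n)" by auto
    have pos: "real (N - n) > 0" using n by auto
    have "f (Suc n) - f n = 1 / (real (N - n)) - 1 / (real (N - n) + 1)"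
      unfolding f_def using e by simp
    also have "\<dots> = 1 / (real (N - n) * (real (N - n) + 1))" using pos by (simp add: field_simps)
    also have "\<dots> \<ge> 1 / (real (N - n) + 1)\<^sup>2"
      using pos by (intro divide_left_mono) (auto simp: power2_eq_square intro!: mult_pos_pos)
    finally show "1 / (real (N - n) + 1)\<^sup>2 \<le> f (Suc n) - f n" .
  qed
  also have "\<dots> = f N - f 0" by (rule sum_lessThan_telescope)
  also have "\<dots> \<le> 1" unfolding f_def by simp
  finally show ?thesis .
qed

lemma powr_sub1:
  fixes x t :: real assumes x: "0 \<le> x" and t: "0 < t" "t \<le> 1"
  shows "(x + 1) powr t \<le> x powr t + 1"
proof (cases "x = 0")
  case True thus ?thesis by simp
next
  case False
  hence xp: "0 < x" using x by simp
  have "(x + 1) powr t = (x + 1) * (x + 1) powr (t - 1)"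
    using powr_split1[of "x + 1" t] xp by (simp add: mult.commute)
  also have "\<dots> = x * (x + 1) powr (t - 1) + (x + 1) powr (t - 1)" by (simp add: algebra_simps)
  also have "\<dots> \<le> x * x powr (t - 1) + 1"
  proof (rule add_mono)
    show "x * (x + 1) powr (t - 1) \<le> x * x powr (t - 1)"
      using xp t by (intro mult_left_mono powr_mono2') auto
    show "(x + 1) powr (t - 1) \<le> 1"
      using xp t by (metis add_le_cancel_left add_nonneg_nonneg diff_le_0_iff_le le_add_same_cancel2
          powr_mono2' powr_one_eq_one less_eq_real_def zero_less_one)
  qed
  also have "x * x powr (t - 1) = x powr t"
    using powr_split1[OF xp, of t] by (simp add: mult.commute)
  finally show ?thesis .
qed



definition Pb :: "real \<Rightarrow> real \<Rightarrow> real \<Rightarrow> nat \<Rightarrow> nat \<Rightarrow> nat" where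
  "Pb c t eL N n = nat \<lceil>c * (real N powr t - real n powr t) + 2 * ln (real (N - n) + 1) / eL\<rceil>"

definition SSb :: "real \<Rightarrow> real \<Rightarrow> real \<Rightarrow> nat \<Rightarrow> nat" where
  "SSb c t eL N = (\<Sum>n<N. 2 * Pb c t eL N n + 1)"

lemma Pb_lower:
  assumes c: "0 \<le> c" and t: "0 < t" and eL: "0 < eL" and n: "n \<le> N"
  shows "c * (real N powr t - real n powr t) + 2 * ln (real (N - n) + 1) / eL \<le> real (Pb c t eL N n)"
  unfolding Pb_def by linarith

lemma Pb_upper:
  assumes c: "0 \<le> c" and t: "0 < t" and eL: "0 < eL" and n: "n \<le> Suc N"
  shows "real (Pb c t eL (Suc N) n) \<le> c * (real (Suc N) powr t - real n powr t) + 2 * ln (real N + 2) / eL + 1"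
proof -
  define x where "x = c * (real (Suc N) powr t - real n powr t) + 2 * ln (real (Suc N - n) + 1) / eL"
  have p1: "real n powr t \<le> real (Suc N) powr t" using n t by (intro powr_mono2) auto
  have l0: "0 \<le> ln (real (Suc N - n) + 1)" by simp
  have x0: "0 \<le> x" unfolding x_def using p1 c l0 eL by (intro add_nonneg_nonneg mult_nonneg_nonneg divide_nonneg_pos) auto
  have "real (Pb c t eL (Suc N) n) = real_of_int \<lceil>x\<rceil>" unfolding Pb_def x_def[symmetric] using x0 by simp
  also have "\<dots> \<le> x + 1" by linarith
  also have "ln (real (Suc N - n) + 1) \<le> ln (real N + 2)" using n by (subst ln_le_cancel_iff) auto
  hence "x \<le> c * (real (Suc N) powr t - real n powr t) + 2 * ln (real N + 2) / eL"
    unfolding x_def using eL by (simp add: divide_right_mono)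
  finally show ?thesis by simp
qed

lemma lin_aux: "(x::real) \<le> a + b + 1 \<Longrightarrow> L = b \<Longrightarrow> 2 * x + 1 \<le> 2 * a + 2 * L + 3"
  by linarith

lemma SS_upper:
  assumes c: "0 \<le> c" and t: "0 < t" "t \<le> 1" and eL: "0 < eL"
  shows "real (SSb c t eL (Suc N)) \<le> 2 * c * real N powr (1 + t) + 2 * c * (1 + t) * real (Suc N) powr t
           - 2 * c * (real N powr (1 + t) / (1 + t)) + real (Suc N) * (4 * ln (real N + 2) / eL + 3)"
proof -
  define L where "L = 2 * ln (real N + 2) / eL"
  have "real (SSb c t eL (Suc N)) = (\<Sum>n<Suc N. 2 * real (Pb c t eL (Suc N) n) + 1)"
    unfolding SSb_def by (simp add: ac_simps)
  also have "\<dots> \<le> (\<Sum>n<Suc N. 2 * (c * (real (Suc N) powr t - real n powr t)) + 2 * L + 3)"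
  proof (rule sum_mono)
    fix n assume "n \<in> {..<Suc N}"
    hence "n \<le> Suc N" by simp
    from Pb_upper[OF c t(1) eL this]
    show "2 * real (Pb c t eL (Suc N) n) + 1 \<le> 2 * (c * (real (Suc N) powr t - real n powr t)) + 2 * L + 3"
      using L_def by (rule lin_aux)
  qed
  also have "\<dots> = (\<Sum>n<Suc N. (2 * c * real (Suc N) powr t + 2 * L + 3) - 2 * c * real n powr t)"
    by (rule sum.cong) (auto simp: algebra_simps)
  also have "\<dots> = real (Suc N) * (2 * c * real (Suc N) powr t + 2 * L + 3) - 2 * c * (\<Sum>n<Suc N. real n powr t)"
  proof -
    have a: "(\<Sum>n<Suc N. (2 * c * real (Suc N) powr t + 2 * L + 3) - 2 * c * real n powr t)
       = (\<Sum>n<Suc N. (2 * c * real (Suc N) powr t + 2 * L + 3)) - (\<Sum>n<Suc N. 2 * c * real n powr t)"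
      by (rule sum_subtractf)
    have b: "(\<Sum>n<Suc N. 2 * c * real n powr t) = 2 * c * (\<Sum>n<Suc N. real n powr t)"
      by (rule sum_distrib_left[symmetric])
    show ?thesis unfolding a b by simp
  qed
  also have "\<dots> \<le> real (Suc N) * (2 * c * real (Suc N) powr t + 2 * L + 3) - 2 * c * (real N powr (1 + t) / (1 + t))"
    using sum_powr_lower[OF t(1), of N] c by (intro diff_left_mono mult_left_mono) auto
  finally have h1: "real (SSb c t eL (Suc N)) \<le> real (Suc N) * (2 * c * real (Suc N) powr t + 2 * L + 3)
      - 2 * c * (real N powr (1 + t) / (1 + t))" .
  have h2: "real (Suc N) * (2 * c * real (Suc N) powr t + 2 * L + 3)
      = 2 * c * (real (Suc N) powr t * real (Suc N)) + real (Suc N) * (2 * L + 3)"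
    by (simp add: algebra_simps)
  have h3: "real (Suc N) powr t * real (Suc N) = real (Suc N) powr (1 + t)"
    using powr_split1[of "real (Suc N)" "1 + t"] by simp
  have h4: "real (Suc N) powr (1 + t) \<le> real N powr (1 + t) + (1 + t) * real (Suc N) powr t"
    using cvx_powr[of "real N" "real (Suc N)" "1 + t"] t by simp
  have h5: "2 * c * real (Suc N) powr (1 + t) \<le> 2 * c * real N powr (1 + t) + 2 * c * (1 + t) * real (Suc N) powr t"
    using mult_left_mono[OF h4, of "2 * c"] c by (simp add: algebra_simps)
  have h6: "real (Suc N) * (2 * L + 3) = real (Suc N) * (4 * ln (real N + 2) / eL + 3)"
    unfolding L_def by simp
  show ?thesis using h1 h5 h6 unfolding h2 h3 by linarith
qed



lemma SS_thresh:
  assumes c: "0 < c" "c < 1" and t: "0 < t" "t \<le> 1" and eL: "0 < eL"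
  shows "\<exists>N0. \<forall>N\<ge>N0. real (SSb c t eL (Suc N)) \<le> 2 / (1 + t) * real N powr (1 + t)"
proof -
  define W where "W = 48 / (eL * t)"
  define Q0 where "Q0 = (14 + W) / (1 - c)"
  have W0: "0 < W" unfolding W_def using eL t by simp
  have Q0ge: "14 + W \<le> Q0" unfolding Q0_def using c W0 by (simp add: field_simps)
  hence Q01: "1 \<le> Q0" using W0 by simp
  define N0 where "N0 = nat \<lceil>Q0 powr (2 / t)\<rceil> + 1"
  show ?thesis
  proof (intro exI allI impI)
    fix N assume N: "N0 \<le> N"
    have N1: "1 \<le> real N" using N unfolding N0_def by simp
    have NQ: "Q0 powr (2 / t) \<le> real N" using N unfolding N0_def by linarith
    define Q where "Q = real N powr (t / 2)"
    have "(Q0 powr (2 / t)) powr (t / 2) \<le> Q" unfolding Q_def using NQ t by (intro powr_mono2) auto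
    moreover have "(Q0 powr (2 / t)) powr (t / 2) = Q0" using t Q01 by (simp add: powr_powr)
    ultimately have QQ0: "Q0 \<le> Q" by simp
    have Q1: "1 \<le> Q" using QQ0 Q01 by simp
    define X where "X = real N powr (1 + t)"
    have Xeq: "X = real N * (Q * Q)"
    proof -
      have a: "real N powr t = real N powr (t / 2) * real N powr (t / 2)"
        using powr_add[of "real N" "t / 2" "t / 2"] by simp
      have b: "real N powr (1 + t) = real N powr 1 * real N powr t" by (rule powr_add)
      show ?thesis unfolding X_def Q_def b a using N1 by simp
    qed
    have coef: "1 - c \<le> 2 / (1 + t) - 2 * c + 2 * c / (1 + t)"
    proof -
      have "(1 - c) * (1 + t) \<le> 2 - 2 * c * (1 + t) + 2 * c"
      proof -
        have "0 \<le> (1 - t) * (1 + c)" using t c by simp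
        thus ?thesis by (simp add: algebra_simps)
      qed
      hence "1 - c \<le> (2 - 2 * c * (1 + t) + 2 * c) / (1 + t)" using t by (simp add: field_simps)
      also have "\<dots> = 2 / (1 + t) - 2 * c * (1 + t) / (1 + t) + 2 * c / (1 + t)"
        by (simp add: add_divide_distrib diff_divide_distrib)
      also have "2 * c * (1 + t) / (1 + t) = 2 * c" using t by simp
      finally show ?thesis .
    qed
    have X0: "0 \<le> X" unfolding X_def by simp
    have main: "(1 - c) * X \<le> 2 / (1 + t) * X - 2 * c * X + 2 * c * (X / (1 + t))"
      using mult_right_mono[OF coef X0] by (simp add: algebra_simps)
    have p1: "real (Suc N) powr t \<le> 2 * real N"
    proof -
      have "real (Suc N) powr t \<le> real (Suc N) powr 1" using t by (intro powr_mono) auto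
      thus ?thesis using N1 by simp
    qed
    have e1: "2 * c * (1 + t) * real (Suc N) powr t \<le> 8 * real N"
    proof -
      have ct: "c * t \<le> 1" using c t by (intro mult_le_one) auto
      have "2 * c * (1 + t) = 2 * c + 2 * (c * t)" by (simp add: algebra_simps)
      hence "2 * c * (1 + t) \<le> 4" using ct c by linarith
      hence "2 * c * (1 + t) * real (Suc N) powr t \<le> 4 * (2 * real N)"
        using p1 c t by (intro mult_mono) auto
      thus ?thesis by simp
    qed
    have lnb: "ln (real N + 2) \<le> 6 * Q / t"
    proof -
      have "ln (real N + 2) \<le> (real N + 2) powr (t / 2) / (t / 2)" using t by (intro ln_powr_bound) auto
      also have "(real N + 2) powr (t / 2) \<le> (3 * real N) powr (t / 2)" using N1 t by (intro powr_mono2) auto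
      also have "(3 * real N) powr (t / 2) = 3 powr (t / 2) * Q" unfolding Q_def by (simp add: powr_mult)
      also have "3 powr (t / 2) \<le> (3::real) powr 1" using t by (intro powr_mono) auto
      finally show ?thesis using t Q1 by (simp add: divide_right_mono mult_right_mono field_simps)
    qed
    have e2: "real (Suc N) * (4 * ln (real N + 2) / eL + 3) \<le> 6 * real N + W * real N * Q"
    proof -
      have "4 * ln (real N + 2) \<le> 4 * (6 * Q / t)" using lnb by simp
      hence "4 * ln (real N + 2) / eL \<le> 4 * (6 * Q / t) / eL" using eL by (intro divide_right_mono) auto
      also have "\<dots> = W * Q / 2" unfolding W_def using t eL by (simp add: field_simps)
      finally have a: "4 * ln (real N + 2) / eL + 3 \<le> W * Q / 2 + 3" by simp
      have l0: "0 \<le> 4 * ln (real N + 2) / eL + 3" using eL by simp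
      have "real (Suc N) * (4 * ln (real N + 2) / eL + 3) \<le> (2 * real N) * (W * Q / 2 + 3)"
        using a N1 l0 by (intro mult_mono) auto
      thus ?thesis by (simp add: algebra_simps)
    qed
    have big: "14 * real N + W * real N * Q \<le> (1 - c) * X"
    proof -
      have "14 + W \<le> (1 - c) * Q" using QQ0 Q0ge c unfolding Q0_def by (simp add: field_simps)
      hence "(14 + W) * Q \<le> (1 - c) * Q * Q" using Q1 by (intro mult_right_mono) auto
      moreover have "14 + W * Q \<le> (14 + W) * Q" using Q1 by (simp add: algebra_simps)
      ultimately have "14 + W * Q \<le> (1 - c) * (Q * Q)" by (simp add: algebra_simps)
      hence "real N * (14 + W * Q) \<le> real N * ((1 - c) * (Q * Q))" using N1 by (intro mult_left_mono) auto
      thus ?thesis unfolding Xeq by (simp add: algebra_simps)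
    qed
    have "real (SSb c t eL (Suc N)) \<le> 2 * c * X + 2 * c * (1 + t) * real (Suc N) powr t
           - 2 * c * (X / (1 + t)) + real (Suc N) * (4 * ln (real N + 2) / eL + 3)"
      unfolding X_def using SS_upper[of c t eL N] c t eL by simp
    thus "real (SSb c t eL (Suc N)) \<le> 2 / (1 + t) * real N powr (1 + t)"
      using main e1 e2 big unfolding X_def[symmetric] by linarith
  qed
qed



lemma decay_conv:
  assumes eL: "0 < etaL" and d: "in_De A etaL"
  shows "\<exists>cL. decayA A cL (exp (- etaL))"
proof -
  obtain cL where cL: "cL > 0" "\<forall>m\<ge>2. \<forall>n\<ge>2. \<bar>A m n\<bar> \<le> cL * exp (- etaL * \<bar>real m - real n\<bar>)"
    using d unfolding in_De_def by blast
  have "\<bar>A m n\<bar> \<le> cL * exp (- etaL) ^ dd m n" if "m \<ge> 2" "n \<ge> 2" for m n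
  proof -
    have "exp (- etaL * \<bar>real m - real n\<bar>) = exp (real (dd m n) * (- etaL))"
      by (simp add: dd_real mult.commute)
    also have "\<dots> = exp (- etaL) ^ dd m n" by (rule exp_of_nat_mult)
    finally show ?thesis using cL that by metis
  qed
  moreover have "exp (- etaL) < 1" using eL by simp
  ultimately show ?thesis unfolding decayA_def using cL(1) by (intro exI[of _ cL]) auto
qed

lemma AG_facts:
  assumes "in_AG eta t v"
  shows "sq2 v" "best_N_err v N \<le> AG_norm eta t v * exp (- (eta * real N powr t))"
    "0 \<le> AG_norm eta t v"
proof -
  show "sq2 v" using assms unfolding in_AG_def by blast
  have bdd: "bdd_above (range (\<lambda>N. best_N_err v N * exp (eta * real N powr t)))"
    using assms unfolding in_AG_def by (rule conjunct2)
  have up: "best_N_err v N * exp (eta * real N powr t) \<le> AG_norm eta t v" for N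
    unfolding AG_norm_def by (rule cSUP_upper[OF _ bdd]) simp
  have "best_N_err v N = (best_N_err v N * exp (eta * real N powr t)) * exp (- (eta * real N powr t))"
    by (simp add: mult.assoc flip: exp_add)
  also have "\<dots> \<le> AG_norm eta t v * exp (- (eta * real N powr t))"
    by (rule mult_right_mono[OF up]) simp
  finally show "best_N_err v N \<le> AG_norm eta t v * exp (- (eta * real N powr t))" .
  show "0 \<le> AG_norm eta t v"
    using up[of 0] best_nonneg[of v 0] by (meson exp_ge_zero order_trans zero_le_mult_iff)
qed

lemma AG_E0: "in_AG eta t v \<Longrightarrow> best_N_err v 0 \<le> AG_norm eta t v"
  using AG_facts(2)[of eta t v 0] by simp

lemma conclude:
  assumes dA: "decayA A cL q" and v: "in_AG eta t v"
    and hb: "\<And>M. best_N_err (apply_mat A v) M * exp (eb * real M powr tb) \<le> C * AG_norm eta t v"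
  shows "in_AG eb tb (apply_mat A v) \<and> AG_norm eb tb (apply_mat A v) \<le> C * AG_norm eta t v"
proof -
  have "bnd (apply_mat A v) (Sb cL q * best_N_err v 0)"
    by (rule apply_mat_bnd[OF dA bnd_v0[OF AG_facts(1)[OF v]]])
  hence s: "sq2 (apply_mat A v)" by (rule bnd_summable)
  have b: "bdd_above (range (\<lambda>N. best_N_err (apply_mat A v) N * exp (eb * real N powr tb)))"
    by (rule bdd_aboveI[of _ "C * AG_norm eta t v"]) (use hb in auto)
  have "AG_norm eb tb (apply_mat A v) \<le> C * AG_norm eta t v"
    unfolding AG_norm_def[of eb tb] by (rule cSUP_least) (use hb in auto)
  thus ?thesis using s b unfolding in_AG_def by blast
qed

lemma best_Av_crude:
  assumes dA: "decayA A cL q" and v: "in_AG eta t v"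
  shows "best_N_err (apply_mat A v) M \<le> Sb cL q * AG_norm eta t v"
proof -
  have b: "bnd (apply_mat A v) (Sb cL q * best_N_err v 0)"
    by (rule apply_mat_bnd[OF dA bnd_v0[OF AG_facts(1)[OF v]]])
  have "best_N_err (apply_mat A v) M \<le> Sb cL q * best_N_err v 0"
    by (rule best_le[of "{}"]) (use b in auto)
  also have "\<dots> \<le> Sb cL q * AG_norm eta t v"
    by (rule mult_left_mono[OF AG_E0[OF v] Sb_nonneg[OF dA]])
  finally show ?thesis .
qed

definition Dc :: "real \<Rightarrow> real \<Rightarrow> real" where "Dc cL q = cL * sqrt (2 / (1 - q\<^sup>2))"

lemma col_tail:
  assumes dA: "decayA A cL q" and k: "k \<ge> 2"
  shows "bnd (\<lambda>l. if p < dd l k then A l k * x else 0) (Dc cL q * \<bar>x\<bar> * q ^ p)"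
  unfolding bnd_def
proof (intro allI impI)
  fix F :: "nat set" assume F: "finite F" "F \<subseteq> {2..}"
  have d: "0 \<le> cL" "0 < q" "q < 1" "\<And>m n. m \<ge> 2 \<Longrightarrow> n \<ge> 2 \<Longrightarrow> \<bar>A m n\<bar> \<le> cL * q ^ dd m n"
    using dA unfolding decayA_def by auto
  have q2: "0 \<le> q\<^sup>2" "q\<^sup>2 < 1" using d by (auto simp: power_less_one_iff abs_square_less_1)
  have "(\<Sum>l\<in>F. (if p < dd l k then A l k * x else 0)\<^sup>2) = (\<Sum>l\<in>{l\<in>F. Suc p \<le> dd l k}. (A l k)\<^sup>2 * x\<^sup>2)"
    using F(1) by (intro sum.mono_neutral_cong_right) (auto simp: power_mult_distrib)
  also have "\<dots> \<le> (\<Sum>l\<in>{l\<in>F. Suc p \<le> dd l k}. (cL\<^sup>2 * x\<^sup>2) * (q\<^sup>2) ^ dd l k)"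
  proof (rule sum_mono)
    fix l assume "l \<in> {l\<in>F. Suc p \<le> dd l k}"
    hence l: "l \<ge> 2" using F by auto
    have "\<bar>A l k\<bar> \<le> cL * q ^ dd l k" using d(4)[OF l k] .
    hence "\<bar>A l k\<bar>\<^sup>2 \<le> (cL * q ^ dd l k)\<^sup>2" by (rule power_mono) simp
    hence "(A l k)\<^sup>2 \<le> (cL * q ^ dd l k)\<^sup>2" by simp
    hence "(A l k)\<^sup>2 * x\<^sup>2 \<le> (cL * q ^ dd l k)\<^sup>2 * x\<^sup>2" by (rule mult_right_mono) simp
    thus "(A l k)\<^sup>2 * x\<^sup>2 \<le> (cL\<^sup>2 * x\<^sup>2) * (q\<^sup>2) ^ dd l k"
      by (simp add: power_mult_distrib power_mult[symmetric] mult.commute mult.left_commute)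
  qed
  also have "\<dots> = (cL\<^sup>2 * x\<^sup>2) * (\<Sum>l\<in>{l\<in>F. Suc p \<le> dd l k}. (q\<^sup>2) ^ dd l k)"
    by (simp add: sum_distrib_left)
  also have "\<dots> \<le> (cL\<^sup>2 * x\<^sup>2) * (2 * (q\<^sup>2) ^ Suc p / (1 - q\<^sup>2))"
    by (rule mult_left_mono[OF geom_dd_bound[OF q2 F(1)]]) simp
  also have "\<dots> \<le> (cL\<^sup>2 * x\<^sup>2) * (2 * (q\<^sup>2) ^ p / (1 - q\<^sup>2))"
  proof -
    have "(q\<^sup>2) ^ Suc p \<le> (q\<^sup>2) ^ p" using q2 by (intro power_decreasing) auto
    thus ?thesis using q2 by (intro mult_left_mono divide_right_mono) auto
  qed
  also have "\<dots> = (Dc cL q * \<bar>x\<bar> * q ^ p)\<^sup>2"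
    unfolding Dc_def using q2 d
    by (simp add: power_mult_distrib power_mult[symmetric] mult.commute mult.left_commute)
  finally have "(\<Sum>l\<in>F. (if p < dd l k then A l k * x else 0)\<^sup>2) \<le> (Dc cL q * \<bar>x\<bar> * q ^ p)\<^sup>2" .
  moreover have "0 \<le> Dc cL q * \<bar>x\<bar> * q ^ p" unfolding Dc_def using d q2 by simp
  ultimately show "L2_set (\<lambda>l. if p < dd l k then A l k * x else 0) F \<le> Dc cL q * \<bar>x\<bar> * q ^ p"
    unfolding L2_set_def by (intro real_le_lsqrt) auto
qed



lemma prod_bound:
  fixes E B a b :: real
  assumes E0: "0 \<le> E" and E: "E \<le> B * exp (- a)" and ex: "b \<le> a + d"
  shows "E * exp b \<le> B * exp d"
proof -
  have B0: "0 \<le> B * exp (- a)" using E0 E by linarith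
  have "E * exp b \<le> (B * exp (- a)) * exp (a + d)"
    using E ex E0 B0 by (intro mult_mono) auto
  also have "\<dots> = B * exp d" by (simp add: mult.assoc flip: exp_add)
  finally show ?thesis .
qed

lemma case_a:
  assumes dA: "decayA A cL q" and band: "banded A p" and eta: "0 < eta" and t: "0 < t" "t \<le> 1"
  shows "\<forall>v. in_AG eta t v \<longrightarrow>
           in_AG (eta / (2 * real p + 1) powr t) t (apply_mat A v) \<and>
           AG_norm (eta / (2 * real p + 1) powr t) t (apply_mat A v) \<le> (Sb cL q * exp eta) * AG_norm eta t v"
proof (intro allI impI)
  fix v assume v: "in_AG eta t v"
  define K where "K = AG_norm eta t v"
  have sv: "sq2 v" by (rule AG_facts(1)[OF v])
  define k where "k = 2 * p + 1"
  have k0: "0 < k" unfolding k_def by simp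
  define eb where "eb = eta / (2 * real p + 1) powr t"
  show "in_AG eb t (apply_mat A v) \<and> AG_norm eb t (apply_mat A v) \<le> (Sb cL q * exp eta) * AG_norm eta t v"
  proof (rule conclude[OF dA v])
    fix M
    define N where "N = M div k"
    have Mc: "(\<Sum>n<N. 2 * p + 1) \<le> M" unfolding N_def k_def[symmetric]
      by (simp add: div_times_less_eq_dividend)
    have R: "bnd (\<lambda>l. if p < dd l (sg v n) then A l (sg v n) * v (sg v n) else 0) 0" for n
    proof (rule bnd_dom[OF bnd_zero])
      fix l :: nat assume l: "2 \<le> l"
      have s2: "2 \<le> sg v n" by (rule sg_props(1)[OF sv])
      show "\<bar>if p < dd l (sg v n) then A l (sg v n) * v (sg v n) else 0\<bar> \<le> \<bar>0\<bar>"
      proof (cases "p < dd l (sg v n)")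
        case True
        hence "\<bar>real l - real (sg v n)\<bar> > real p" by (simp add: dd_real)
        hence "A l (sg v n) = 0" using band l s2 unfolding banded_def by blast
        thus ?thesis by simp
      qed simp
    qed
    have "best_N_err (apply_mat A v) M \<le> Sb cL q * best_N_err v N + (\<Sum>n<N. 0)"
      by (rule approx[OF dA sv, of "\<lambda>n. p"]) (use Mc R in auto)
    also have "\<dots> \<le> Sb cL q * (K * exp (- (eta * real N powr t)))"
      using AG_facts(2)[OF v, of N] Sb_nonneg[OF dA] unfolding K_def by (simp add: mult_left_mono)
    finally have E: "best_N_err (apply_mat A v) M \<le> (Sb cL q * K) * exp (- (eta * real N powr t))"
      by (simp add: mult.assoc)
    have ex: "eb * real M powr t \<le> eta * real N powr t + eta"
    proof -
      have m1: "M mod k < k" using k0 by simp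
      have m2: "N * k + M mod k = M" unfolding N_def by (rule div_mult_mod_eq)
      have m3: "(N + 1) * k = N * k + k" by simp
      have "M < (N + 1) * k" using m1 m2 m3 by linarith
      hence "real M < (real N + 1) * real k" by (metis of_nat_1 of_nat_add of_nat_less_iff of_nat_mult)
      hence "real M / real k \<le> real N + 1" using k0 by (simp add: field_simps)
      hence "(real M / real k) powr t \<le> (real N + 1) powr t" using t by (intro powr_mono2) auto
      also have "\<dots> \<le> real N powr t + 1" by (rule powr_sub1) (use t in auto)
      finally have a: "(real M / real k) powr t \<le> real N powr t + 1" .
      have "eb * real M powr t = eta * (real M / real k) powr t"
        unfolding eb_def k_def by (simp add: powr_divide add.commute)
      also have "\<dots> \<le> eta * (real N powr t + 1)" using a eta by (intro mult_left_mono) auto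
      finally show ?thesis by (simp add: algebra_simps)
    qed
    have "best_N_err (apply_mat A v) M * exp (eb * real M powr t) \<le> (Sb cL q * K) * exp eta"
      by (rule prod_bound[OF best_nonneg E ex])
    thus "best_N_err (apply_mat A v) M * exp (eb * real M powr t) \<le> (Sb cL q * exp eta) * AG_norm eta t v"
      unfolding K_def by (simp add: algebra_simps)
  qed
qed



lemma SSb_ge: "N \<le> SSb c t eL N"
proof -
  have "(\<Sum>n<N. (1::nat)) \<le> (\<Sum>n<N. 2 * Pb c t eL N n + 1)" by (rule sum_mono) simp
  thus ?thesis unfolding SSb_def by simp
qed

lemma zeta_cancel:
  assumes t: "0 < t"
  shows "zeta t * (2 / (1 + t)) powr (t / (1 + t)) = 1"
proof -
  have "zeta t * (2 / (1 + t)) powr (t / (1 + t)) = ((1 + t) / 2 * (2 / (1 + t))) powr (t / (1 + t))"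
    unfolding zeta_def by (simp only: powr_mult)
  also have "(1 + t) / 2 * (2 / (1 + t)) = (1::real)" using t by simp
  finally show ?thesis by simp
qed

lemma exp_ln_sq:
  fixes y :: real assumes "0 < y"
  shows "exp (- (2 * ln y)) = 1 / y\<^sup>2"
proof -
  have h: "2 * ln y = ln y + ln y" by linarith
  have ey: "exp (ln y) = y" by (rule exp_ln[OF assms])
  have "exp (2 * ln y) = exp (ln y) * exp (ln y)" unfolding h by (rule exp_add)
  hence e2: "exp (2 * ln y) = y\<^sup>2" unfolding ey by (simp add: power2_eq_square)
  have "exp (- (2 * ln y)) = inverse (exp (2 * ln y))" by (rule exp_minus)
  thus ?thesis unfolding e2 by (simp add: inverse_eq_divide)
qed

lemma case_b:
  assumes dA: "decayA A cL (exp (- etaL))" and eta: "0 < eta" "eta < etaL" and t: "0 < t" "t \<le> 1"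
  shows "\<exists>C. \<forall>v. in_AG eta t v \<longrightarrow>
           in_AG (zeta t * eta) (t / (1 + t)) (apply_mat A v) \<and>
           AG_norm (zeta t * eta) (t / (1 + t)) (apply_mat A v) \<le> C * AG_norm eta t v"
proof -
  define q where "q = exp (- etaL)"
  have etaL: "0 < etaL" using eta by simp
  define c where "c = eta / etaL"
  have c: "0 < c" "c < 1" unfolding c_def using eta etaL by auto
  obtain N0 where N0: "\<And>N. N \<ge> N0 \<Longrightarrow> real (SSb c t etaL (Suc N)) \<le> 2 / (1 + t) * real N powr (1 + t)"
    using SS_thresh[OF c t etaL] by blast
  define Mthr where "Mthr = SSb c t etaL N0"
  define s where "s = t / (1 + t)"
  define eb where "eb = zeta t * eta"
  have s0: "0 \<le> s" unfolding s_def using t by simp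
  have eb0: "0 \<le> eb" unfolding eb_def zeta_def using eta by simp
  have Sb0: "0 \<le> Sb cL q" unfolding q_def using Sb_nonneg[OF dA] .
  have qq: "0 < q" "q < 1" "0 \<le> cL" using dA unfolding q_def decayA_def by auto
  have q2: "q\<^sup>2 < 1" using qq by (auto simp: power_less_one_iff abs_square_less_1)
  have Dc0: "0 \<le> Dc cL q" unfolding Dc_def using qq q2 by simp
  define C where "C = Sb cL q * exp (eb * real Mthr powr s) + (Sb cL q + Dc cL q)"
  have dAq: "decayA A cL q" unfolding q_def by (rule dA)
  show ?thesis
  proof (intro exI[of _ C] allI impI)
    fix v assume v: "in_AG eta t v"
    define K where "K = AG_norm eta t v"
    have K0: "0 \<le> K" unfolding K_def by (rule AG_facts(3)[OF v])
    have sv: "sq2 v" by (rule AG_facts(1)[OF v])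
    show "in_AG (zeta t * eta) (t / (1 + t)) (apply_mat A v) \<and>
          AG_norm (zeta t * eta) (t / (1 + t)) (apply_mat A v) \<le> C * AG_norm eta t v"
      unfolding eb_def[symmetric] s_def[symmetric]
    proof (rule conclude[OF dAq v])
      fix M
      show "best_N_err (apply_mat A v) M * exp (eb * real M powr s) \<le> C * AG_norm eta t v"
      proof (cases "Mthr \<le> M")
        case False
        have E: "best_N_err (apply_mat A v) M \<le> Sb cL q * K"
          unfolding K_def by (rule best_Av_crude[OF dAq v])
        have "exp (eb * real M powr s) \<le> exp (eb * real Mthr powr s)"
          using False s0 eb0 by (auto intro!: mult_left_mono powr_mono2)
        hence "best_N_err (apply_mat A v) M * exp (eb * real M powr s) \<le> (Sb cL q * K) * exp (eb * real Mthr powr s)"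
          using E best_nonneg[of "apply_mat A v" M] Sb0 K0 by (intro mult_mono) auto
        also have "\<dots> \<le> C * K" unfolding C_def using Sb0 Dc0 K0
          by (simp add: algebra_simps)
        finally show ?thesis unfolding K_def .
      next
        case True
        define S where "S = {N. SSb c t etaL N \<le> M}"
        have Sfin: "finite S" unfolding S_def
          by (rule finite_subset[of _ "{..M}"]) (auto intro: order_trans[OF SSb_ge])
        have N0S: "N0 \<in> S" unfolding S_def using True unfolding Mthr_def by simp
        define N where "N = Max S"
        have NS: "N \<in> S" unfolding N_def using Sfin N0S by (intro Max_in) auto
        have NN0: "N0 \<le> N" unfolding N_def using Sfin N0S by (intro Max_ge)
        have SN: "SSb c t etaL N \<le> M" using NS unfolding S_def by simp
        have SN1: "M < SSb c t etaL (Suc N)"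
        proof (rule ccontr)
          assume "\<not> M < SSb c t etaL (Suc N)"
          hence "Suc N \<in> S" unfolding S_def by simp
          hence "Suc N \<le> N" unfolding N_def using Sfin by (intro Max_ge)
          thus False by simp
        qed
        define e where "e = exp (- (eta * real N powr t))"
        define P where "P = Pb c t etaL N"
        define R where "R = (\<lambda>n. Dc cL q * K * e * (1 / (real (N - n) + 1)\<^sup>2))"
        have Rb: "bnd (\<lambda>l. if P n < dd l (sg v n) then A l (sg v n) * v (sg v n) else 0) (R n)" if n: "n < N" for n
        proof (rule bnd_mono[OF col_tail[OF dAq sg_props(1)[OF sv]]])
          define y where "y = real (N - n) + 1"
          have y0: "0 < y" unfolding y_def by simp
          have vb: "\<bar>v (sg v n)\<bar> \<le> K * exp (- (eta * real n powr t))"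
            using sg_bound[OF sv, of n] AG_facts(2)[OF v, of n] unfolding K_def by linarith
          define x where "x = c * (real N powr t - real n powr t) + 2 * ln y / etaL"
          have xP: "x \<le> real (P n)" unfolding x_def P_def y_def
            by (rule Pb_lower) (use c t etaL n in auto)
          have "q ^ P n = exp (real (P n) * (- etaL))" unfolding q_def by (rule exp_of_nat_mult[symmetric])
          also have "\<dots> \<le> exp (x * (- etaL))" using xP etaL by simp
          also have "x * (- etaL) = - (eta * real N powr t) + eta * real n powr t + - (2 * ln y)"
            unfolding x_def c_def using etaL by (simp add: field_simps)
          also have "exp \<dots> = e * exp (eta * real n powr t) * (1 / y\<^sup>2)"
            unfolding e_def exp_add using exp_ln_sq[OF y0] by simp
          finally have qb: "q ^ P n \<le> e * exp (eta * real n powr t) * (1 / y\<^sup>2)" .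
          have "Dc cL q * \<bar>v (sg v n)\<bar> * q ^ P n
              \<le> Dc cL q * (K * exp (- (eta * real n powr t))) * (e * exp (eta * real n powr t) * (1 / y\<^sup>2))"
            using vb qb Dc0 K0 unfolding q_def by (intro mult_mono) auto
          also have "\<dots> = Dc cL q * K * e * (1 / y\<^sup>2) * (exp (- (eta * real n powr t)) * exp (eta * real n powr t))"
            by (simp add: algebra_simps)
          also have "exp (- (eta * real n powr t)) * exp (eta * real n powr t) = 1" by (simp flip: exp_add)
          finally show "Dc cL q * \<bar>v (sg v n)\<bar> * q ^ P n \<le> R n" unfolding R_def y_def by simp
        qed
        have "best_N_err (apply_mat A v) M \<le> Sb cL q * best_N_err v N + (\<Sum>n<N. R n)"
          by (rule approx[OF dAq sv, of P]) (use SN Rb in \<open>auto simp: P_def SSb_def\<close>)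
        also have "(\<Sum>n<N. R n) \<le> Dc cL q * K * e"
        proof -
          have "(\<Sum>n<N. R n) = Dc cL q * K * e * (\<Sum>n<N. 1 / (real (N - n) + 1)\<^sup>2)"
            unfolding R_def by (simp add: sum_distrib_left)
          also have "\<dots> \<le> Dc cL q * K * e * 1"
            using inv_sq_sum[of N] Dc0 K0 unfolding e_def by (intro mult_left_mono) auto
          finally show ?thesis by simp
        qed
        also have "Sb cL q * best_N_err v N \<le> Sb cL q * (K * e)"
          using AG_facts(2)[OF v, of N] Sb0 unfolding K_def e_def by (intro mult_left_mono) auto
        finally have E: "best_N_err (apply_mat A v) M \<le> ((Sb cL q + Dc cL q) * K) * exp (- (eta * real N powr t))"
          unfolding e_def by (simp add: algebra_simps)
        have ex: "eb * real M powr s \<le> eta * real N powr t + 0"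
        proof -
          have "real M \<le> real (SSb c t etaL (Suc N))" using SN1 by simp
          also have "\<dots> \<le> 2 / (1 + t) * real N powr (1 + t)" by (rule N0[OF NN0])
          finally have Mb: "real M \<le> 2 / (1 + t) * real N powr (1 + t)" .
          have "real M powr s \<le> (2 / (1 + t) * real N powr (1 + t)) powr s"
            using Mb s0 by (intro powr_mono2) auto
          also have "\<dots> = (2 / (1 + t)) powr s * real N powr ((1 + t) * s)"
            by (simp only: powr_mult powr_powr)
          also have "(1 + t) * s = t" unfolding s_def using t by simp
          finally have a: "real M powr s \<le> (2 / (1 + t)) powr s * real N powr t" .
          have z0: "0 \<le> eta * zeta t" using eta by (simp add: zeta_def)
          have "eb * real M powr s = (eta * zeta t) * real M powr s" unfolding eb_def by simp
          also have "\<dots> \<le> (eta * zeta t) * ((2 / (1 + t)) powr s * real N powr t)"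
            by (rule mult_left_mono[OF a z0])
          finally have "eb * real M powr s \<le> eta * zeta t * ((2 / (1 + t)) powr s * real N powr t)" .
          also have "\<dots> = eta * (zeta t * (2 / (1 + t)) powr s) * real N powr t" by (simp add: algebra_simps)
          also have "zeta t * (2 / (1 + t)) powr s = 1" unfolding s_def by (rule zeta_cancel[OF t(1)])
          finally show ?thesis by simp
        qed
        have "best_N_err (apply_mat A v) M * exp (eb * real M powr s) \<le> ((Sb cL q + Dc cL q) * K) * exp 0"
          by (rule prod_bound[OF best_nonneg E ex])
        also have "\<dots> \<le> C * K" unfolding C_def using Sb0 Dc0 K0
          by (simp add: algebra_simps)
        finally show ?thesis unfolding K_def .
      qed
    qed
  qed
qed


theorem mainTheorem6:
  fixes nu sig :: "real \<Rightarrow> real" and etaL eta t eta_bar t_bar :: real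
  assumes nu_smooth: "smooth_fun nu" and sig_smooth: "smooth_fun sig"
    and nu_bounds: "\<exists>nu_lo nu_hi. 0 < nu_lo \<and> (\<forall>x\<in>{-1<..<1}. nu_lo \<le> nu x \<and> nu x \<le> nu_hi)"
    and sig_bounds: "\<exists>sig_hi. \<forall>x\<in>{-1<..<1}. 0 \<le> sig x \<and> sig x \<le> sig_hi"
    and etaL_pos: "etaL > 0"
    and decay: "in_De (stiffness nu sig) etaL"
    and eta_pos: "eta > 0" and t_range: "0 < t" "t \<le> 1"
    and cases: "(\<exists>p::nat. banded (stiffness nu sig) p \<and>
                    eta_bar = eta / (2 * real p + 1) powr t \<and> t_bar = t)
              \<or> (eta < etaL \<and> eta_bar = zeta t * eta \<and> t_bar = t / (1 + t))"
  shows "\<exists>C. \<forall>v. in_AG eta t v \<longrightarrow>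
           in_AG eta_bar t_bar (apply_mat (stiffness nu sig) v) \<and>
           AG_norm eta_bar t_bar (apply_mat (stiffness nu sig) v) \<le> C * AG_norm eta t v"
proof -
  obtain cL where dA: "decayA (stiffness nu sig) cL (exp (- etaL))"
    using decay_conv[OF etaL_pos decay] by blast
  from cases show ?thesis
  proof
    assume "\<exists>p::nat. banded (stiffness nu sig) p \<and> eta_bar = eta / (2 * real p + 1) powr t \<and> t_bar = t"
    then obtain p where p: "banded (stiffness nu sig) p" "eta_bar = eta / (2 * real p + 1) powr t" "t_bar = t"
      by blast
    have "\<forall>v. in_AG eta t v \<longrightarrow>
           in_AG (eta / (2 * real p + 1) powr t) t (apply_mat (stiffness nu sig) v) \<and>
           AG_norm (eta / (2 * real p + 1) powr t) t (apply_mat (stiffness nu sig) v)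
             \<le> (Sb cL (exp (- etaL)) * exp eta) * AG_norm eta t v"
      by (rule case_a[OF dA p(1) eta_pos t_range])
    thus ?thesis unfolding p(2,3) by blast
  next
    assume h: "eta < etaL \<and> eta_bar = zeta t * eta \<and> t_bar = t / (1 + t)"
    have "\<exists>C. \<forall>v. in_AG eta t v \<longrightarrow>
           in_AG (zeta t * eta) (t / (1 + t)) (apply_mat (stiffness nu sig) v) \<and>
           AG_norm (zeta t * eta) (t / (1 + t)) (apply_mat (stiffness nu sig) v) \<le> C * AG_norm eta t v"
      using h by (intro case_b[OF dA eta_pos _ t_range]) auto
    thus ?thesis using h by simp
  qed
qed

end
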